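(* (Correctness.) Let $A$ be a ground (base) type and $v$ a value of type $A$. If $\cdot\vdash M:A$ in CC and $M\triangleright^* v$, then $\Delta_\Gamma\cup\Delta_M\vdash[\![M]\!]\triangleright^* v'$ in DCC for some $v'$ with $v'\equiv[\![v]\!]$, where $\Gamma=\cdot$, $\Delta_\Gamma=[\![\Gamma]\!]_d$ and $\Delta_M=[\![M]\!]_d$.
   Context: CC is the Calculus of Constructions with universes $U_0,U_1,\dots$, informally extended with base (ground) types such as the unit type and natural numbers whose types and values contain no $\lambda$-abstractions. Expressions $x\mid U_i\mid\Pi x{:}A.B\mid L\,M\mid\lambda x{:}A.M$; reduction $(\lambda x{:}A.N)\,M\triangleright N[M/x]$, $\triangleright^*$ zero or more steps; typing $\Gamma\vdash M:A$ by the standard CC rules (variable, $U_i:U_{i+1}$, $\Pi$ in $U_{\max(i,j)}$, application with result type $B[N/x]$, abstraction, conversion up to $\beta\eta$-equivalence). DCC: expressions $x\mid U_i\mid\Pi x{:}A.B\mid L@M\mid\ell_i\{\overline M\}$ with label names $\ell_i$ and lists $\overline M$; label contexts $\Delta::=\cdot\mid\Delta,\ell_i(\{\overline x{:}\overline A\},x{:}A\mapsto L:B)$. Reduction: $\Delta\vdash\ell\{\overline M\}@N\triangleright L[\overline M/\overline x,N/x]$ when $\ell(\{\overline x{:}\overline A\},x{:}A\mapsto L:B)\in\Delta$; $\triangleright^*$ zero or more steps. Equivalence $\equiv$ in DCC: two terms are equivalent if they reduce to a common term, or by the $\eta$-rule: if $L\triangleright^*\ell\{\overline N\}$, $M\triangleright^*M'$,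 $\ell(\{\overline x{:}\overline A\},x{:}A\mapsto N:B)\in\Delta$ and $N[\overline N/\overline x]\equiv M'@x$ then $L\equiv M$ (and symmetrically). Translation (by induction on the implicit typing derivation; each source $\lambda$ has a distinct tag $i$, written $\lambda^i$, corresponding to label $\ell_i$). $\mathrm{FV}(M)$ for $\Gamma\vdash M:A$: with $x_1,\dots,x_n$ the unbound variables of $M$ and $A$ and $\Gamma\vdash x_k:A_k$, $\mathrm{FV}(M)=\mathrm{FV}(A_1)\cup\dots\cup\mathrm{FV}(A_n)\cup(x_1{:}A_1,\dots,x_n{:}A_n)$, where $\cup$ appends the entries of the right operand not already in the left, preserving order. $[\![-]\!]$: $x\mapsto x$, $U_i\mapsto U_i$, $\Pi x{:}A.B\mapsto\Pi x{:}[\![A]\!].[\![B]\!]$, $M\,N\mapsto[\![M]\!]@[\![N]\!]$, $\lambda^ix{:}A.M\mapsto\ell_i\{\overline x\}$ where $\overline x{:}\overline A=\mathrm{FV}(\lambda^ix{:}A.M)$; base types and values translate to themselves. $[\![-]\!]_d$: universe (and base types/values) $\mapsto\cdot$; variable of type $A\mapsto[\![A]\!]_d$; $\Pi x{:}A.B\mapsto[\![A]\!]_d\cup[\![B]\!]_d$; $M\,N:B[N/x]$ (with $M:\Pi x{:}A.B$) $\mapsto[\![M]\!]_d\cup[\![N]\!]_d\cup[\![B[N/x]]\!]_d$; $\lambda^ix{:}A.M:\Pi x{:}A.B\mapsto([\![A]\!]_d\cup[\![M]\!]_d),\ell_i(\{\overline x{:}[\![\overline A]\!]\},x{:}[\![A]\!]\mapsto[\![M]\!]:[\![B]\!])$;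 a conversion from $M:A$ to $M:B\mapsto[\![M]\!]_d\cup[\![B]\!]_d$. On contexts: $[\![\cdot]\!]_d=\cdot$, $[\![\Gamma,x{:}A]\!]_d=[\![\Gamma]\!]_d\cup[\![A]\!]_d$. *)

theory Defs
  imports Main
begin

text \<open>Variables are de Bruijn indices. \<open>CLam t A M\<close> is the lambda with tag \<open>t\<close>
 (corresponding to label \<open>\<ell>_t\<close>), domain \<open>A\<close> and body \<open>M\<close>.\<close>

datatype cterm = CVar nat | CU nat | CPi cterm cterm | CApp cterm cterm
  | CLam nat cterm cterm | CTUnit | CUnitV | CTNat | CNatV nat

primrec clift :: "nat \<Rightarrow> cterm \<Rightarrow> cterm" where
  "clift k (CVar i) = (if i < k then CVar i else CVar (Suc i))"
| "clift k (CU n) = CU n"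
| "clift k (CPi A B) = CPi (clift k A) (clift (Suc k) B)"
| "clift k (CApp M N) = CApp (clift k M) (clift k N)"
| "clift k (CLam t A M) = CLam t (clift k A) (clift (Suc k) M)"
| "clift k CTUnit = CTUnit"
| "clift k CUnitV = CUnitV"
| "clift k CTNat = CTNat"
| "clift k (CNatV n) = CNatV n"

primrec csubst :: "cterm \<Rightarrow> nat \<Rightarrow> cterm \<Rightarrow> cterm" where
  "csubst (CVar i) k N = (if i < k then CVar i else if i = k then N else CVar (i - 1))"
| "csubst (CU n) k N = CU n"
| "csubst (CPi A B) k N = CPi (csubst A k N) (csubst B (Suc k) (clift 0 N))"
| "csubst (CApp L M) k N = CApp (csubst L k N) (csubst M k N)"
| "csubst (CLam t A M) k N = CLam t (csubst A k N) (csubst M (Suc k) (clift 0 N))"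
| "csubst CTUnit k N = CTUnit"
| "csubst CUnitV k N = CUnitV"
| "csubst CTNat k N = CTNat"
| "csubst (CNatV n) k N = CNatV n"

primrec cfv :: "cterm \<Rightarrow> nat set" where
  "cfv (CVar i) = {i}"
| "cfv (CU n) = {}"
| "cfv (CPi A B) = cfv A \<union> {i. Suc i \<in> cfv B}"
| "cfv (CApp M N) = cfv M \<union> cfv N"
| "cfv (CLam t A M) = cfv A \<union> {i. Suc i \<in> cfv M}"
| "cfv CTUnit = {}"
| "cfv CUnitV = {}"
| "cfv CTNat = {}"
| "cfv (CNatV n) = {}"

primrec ctags :: "cterm \<Rightarrow> nat list" where
  "ctags (CVar i) = []"
| "ctags (CU n) = []"
| "ctags (CPi A B) = ctags A @ ctags B"
| "ctags (CApp M N) = ctags M @ ctags N"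
| "ctags (CLam t A M) = t # ctags A @ ctags M"
| "ctags CTUnit = []"
| "ctags CUnitV = []"
| "ctags CTNat = []"
| "ctags (CNatV n) = []"

definition cliftn :: "nat \<Rightarrow> cterm \<Rightarrow> cterm" where
  "cliftn n M = (clift 0 ^^ n) M"

text \<open>Contexts: lists of types, head = innermost binding (index 0).
  \<open>cty \<Gamma> i\<close> is the type of variable \<open>i\<close>, as a term in context \<open>\<Gamma>\<close>.\<close>
definition cty :: "cterm list \<Rightarrow> nat \<Rightarrow> cterm" where
  "cty \<Gamma> i = cliftn (Suc i) (\<Gamma> ! i)"

inductive cbeta_head :: "cterm \<Rightarrow> cterm \<Rightarrow> bool" where
  "cbeta_head (CApp (CLam t A N) M) (csubst N 0 M)"

inductive ceta_head :: "cterm \<Rightarrow> cterm \<Rightarrow> bool" where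
  "ceta_head (CLam t A (CApp (clift 0 M) (CVar 0))) M"

inductive ccomp :: "(cterm \<Rightarrow> cterm \<Rightarrow> bool) \<Rightarrow> cterm \<Rightarrow> cterm \<Rightarrow> bool" for R where
  base: "R M N \<Longrightarrow> ccomp R M N"
| PiL: "ccomp R A A' \<Longrightarrow> ccomp R (CPi A B) (CPi A' B)"
| PiR: "ccomp R B B' \<Longrightarrow> ccomp R (CPi A B) (CPi A B')"
| AppL: "ccomp R M M' \<Longrightarrow> ccomp R (CApp M N) (CApp M' N)"
| AppR: "ccomp R N N' \<Longrightarrow> ccomp R (CApp M N) (CApp M N')"
| LamL: "ccomp R A A' \<Longrightarrow> ccomp R (CLam t A M) (CLam t A' M)"
| LamR: "ccomp R M M' \<Longrightarrow> ccomp R (CLam t A M) (CLam t A M')"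

definition cred :: "cterm \<Rightarrow> cterm \<Rightarrow> bool" where
  "cred = (ccomp cbeta_head)\<^sup>*\<^sup>*"

definition cconv :: "cterm \<Rightarrow> cterm \<Rightarrow> bool" where
  "cconv = equivclp (ccomp (\<lambda>M N. cbeta_head M N \<or> ceta_head M N))"

inductive cc_wf :: "cterm list \<Rightarrow> bool"
  and cc_ty :: "cterm list \<Rightarrow> cterm \<Rightarrow> cterm \<Rightarrow> bool" where
  wf_nil: "cc_wf []"
| wf_cons: "cc_wf \<Gamma> \<Longrightarrow> cc_ty \<Gamma> A (CU i) \<Longrightarrow> cc_wf (A # \<Gamma>)"
| ty_var: "cc_wf \<Gamma> \<Longrightarrow> i < length \<Gamma> \<Longrightarrow> cc_ty \<Gamma> (CVar i) (cty \<Gamma> i)"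
| ty_univ: "cc_wf \<Gamma> \<Longrightarrow> cc_ty \<Gamma> (CU i) (CU (Suc i))"
| ty_pi: "cc_ty \<Gamma> A (CU i) \<Longrightarrow> cc_ty (A # \<Gamma>) B (CU j) \<Longrightarrow> cc_ty \<Gamma> (CPi A B) (CU (max i j))"
| ty_app: "cc_ty \<Gamma> M (CPi A B) \<Longrightarrow> cc_ty \<Gamma> N A \<Longrightarrow> cc_ty \<Gamma> (CApp M N) (csubst B 0 N)"
| ty_lam: "cc_ty (A # \<Gamma>) M B \<Longrightarrow> cc_ty \<Gamma> (CPi A B) (CU i) \<Longrightarrow> cc_ty \<Gamma> (CLam t A M) (CPi A B)"
| ty_conv: "cc_ty \<Gamma> M A \<Longrightarrow> cc_ty \<Gamma> B (CU i) \<Longrightarrow> cconv A B \<Longrightarrow> cc_ty \<Gamma> M B"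
| ty_tunit: "cc_wf \<Gamma> \<Longrightarrow> cc_ty \<Gamma> CTUnit (CU 0)"
| ty_unitv: "cc_wf \<Gamma> \<Longrightarrow> cc_ty \<Gamma> CUnitV CTUnit"
| ty_tnat: "cc_wf \<Gamma> \<Longrightarrow> cc_ty \<Gamma> CTNat (CU 0)"
| ty_natv: "cc_wf \<Gamma> \<Longrightarrow> cc_ty \<Gamma> (CNatV n) CTNat"

definition ground_type :: "cterm \<Rightarrow> bool" where
  "ground_type A \<longleftrightarrow> A = CTUnit \<or> A = CTNat"

inductive value_of :: "cterm \<Rightarrow> cterm \<Rightarrow> bool" where
  "value_of CUnitV CTUnit"
| "value_of (CNatV n) CTNat"

datatype dterm = DVar nat | DU nat | DPi dterm dterm | DApp dterm dterm
  | DLab nat "dterm list" | DTUnit | DUnitV | DTNat | DNatV nat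

text \<open>A label-context entry \<open>\<ell>_l({xs : As}, x : A \<mapsto> L : B)\<close> is \<open>(l, As, A, L, B)\<close>.
 In de Bruijn form the parameters form a telescope: \<open>As ! k\<close> lives in the context of
 the first \<open>k\<close> parameters, \<open>A\<close> in that of all \<open>n = length As\<close> parameters, and \<open>L\<close>, \<open>B\<close>
 in that of the parameters followed by \<open>x\<close> (so \<open>x\<close> is index 0 and parameter \<open>k\<close> is
 index \<open>n - k\<close>).\<close>
type_synonym lentry = "nat \<times> dterm list \<times> dterm \<times> dterm \<times> dterm"
type_synonym lctx = "lentry list"

primrec dren :: "(nat \<Rightarrow> nat) \<Rightarrow> dterm \<Rightarrow> dterm" where
  "dren f (DVar i) = DVar (f i)"
| "dren f (DU n) = DU n"
| "dren f (DPi A B) = DPi (dren f A) (dren (\<lambda>i. case i of 0 \<Rightarrow> 0 | Suc j \<Rightarrow> Suc (f j)) B)"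
| "dren f (DApp M N) = DApp (dren f M) (dren f N)"
| "dren f (DLab l Ns) = DLab l (map (dren f) Ns)"
| "dren f DTUnit = DTUnit"
| "dren f DUnitV = DUnitV"
| "dren f DTNat = DTNat"
| "dren f (DNatV n) = DNatV n"

definition dlift :: "dterm \<Rightarrow> dterm" where
  "dlift = dren Suc"

primrec dsubst :: "(nat \<Rightarrow> dterm) \<Rightarrow> dterm \<Rightarrow> dterm" where
  "dsubst s (DVar i) = s i"
| "dsubst s (DU n) = DU n"
| "dsubst s (DPi A B) = DPi (dsubst s A) (dsubst (\<lambda>i. case i of 0 \<Rightarrow> DVar 0 | Suc j \<Rightarrow> dlift (s j)) B)"
| "dsubst s (DApp M N) = DApp (dsubst s M) (dsubst s N)"
| "dsubst s (DLab l Ns) = DLab l (map (dsubst s) Ns)"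
| "dsubst s DTUnit = DTUnit"
| "dsubst s DUnitV = DUnitV"
| "dsubst s DTNat = DTNat"
| "dsubst s (DNatV n) = DNatV n"

text \<open>The substitution \<open>[Ns/xs, N/x]\<close> for a label body.\<close>
definition lsub :: "dterm list \<Rightarrow> dterm \<Rightarrow> nat \<Rightarrow> dterm" where
  "lsub Ns N i = (if i = 0 then N else if i \<le> length Ns then Ns ! (length Ns - i)
                  else DVar (i - Suc (length Ns)))"

inductive dstep :: "lctx \<Rightarrow> dterm \<Rightarrow> dterm \<Rightarrow> bool" for \<Delta> where
  lab: "(l, As, A, L, B) \<in> set \<Delta> \<Longrightarrow> length Ns = length As \<Longrightarrow>
        dstep \<Delta> (DApp (DLab l Ns) N) (dsubst (lsub Ns N) L)"
| PiL: "dstep \<Delta> A A' \<Longrightarrow> dstep \<Delta> (DPi A B) (DPi A' B)"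
| PiR: "dstep \<Delta> B B' \<Longrightarrow> dstep \<Delta> (DPi A B) (DPi A B')"
| AppL: "dstep \<Delta> M M' \<Longrightarrow> dstep \<Delta> (DApp M N) (DApp M' N)"
| AppR: "dstep \<Delta> N N' \<Longrightarrow> dstep \<Delta> (DApp M N) (DApp M N')"
| LabArg: "i < length Ns \<Longrightarrow> dstep \<Delta> (Ns ! i) M' \<Longrightarrow> dstep \<Delta> (DLab l Ns) (DLab l (Ns[i := M']))"

definition dsteps :: "lctx \<Rightarrow> dterm \<Rightarrow> dterm \<Rightarrow> bool" where
  "dsteps \<Delta> = (dstep \<Delta>)\<^sup>*\<^sup>*"

text \<open>Equivalence: common reduct, or the eta rule (both orientations). In the eta rule
 the bound \<open>x\<close> becomes the fresh index 0, so the other terms are lifted.\<close>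
inductive deq :: "lctx \<Rightarrow> dterm \<Rightarrow> dterm \<Rightarrow> bool" for \<Delta> where
  common: "dsteps \<Delta> L N \<Longrightarrow> dsteps \<Delta> M N \<Longrightarrow> deq \<Delta> L M"
| eta1: "dsteps \<Delta> L (DLab l Ns) \<Longrightarrow> dsteps \<Delta> M M' \<Longrightarrow> (l, As, A, N, B) \<in> set \<Delta> \<Longrightarrow>
         length Ns = length As \<Longrightarrow>
         deq \<Delta> (dsubst (lsub (map dlift Ns) (DVar 0)) N) (DApp (dlift M') (DVar 0)) \<Longrightarrow>
         deq \<Delta> L M"
| eta2: "dsteps \<Delta> L (DLab l Ns) \<Longrightarrow> dsteps \<Delta> M M' \<Longrightarrow> (l, As, A, N, B) \<in> set \<Delta> \<Longrightarrow>
         length Ns = length As \<Longrightarrow>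
         deq \<Delta> (dsubst (lsub (map dlift Ns) (DVar 0)) N) (DApp (dlift M') (DVar 0)) \<Longrightarrow>
         deq \<Delta> M L"

definition lunion :: "'a list \<Rightarrow> 'a list \<Rightarrow> 'a list" where
  "lunion xs ys = xs @ filter (\<lambda>y. y \<notin> set xs) ys"

text \<open>A set of variables listed in context order (outermost binding first).\<close>
definition ctxord :: "nat set \<Rightarrow> nat list" where
  "ctxord S = rev (sorted_list_of_set S)"

text \<open>\<open>FV\<close>: given the unbound variables \<open>x_1..x_n\<close> (in context order),
 \<open>FV = FV(A_1) \<union> ... \<union> FV(A_n) \<union> (x_1,..,x_n)\<close>, where \<open>A_k\<close> is the type of \<open>x_k\<close>
 (whose own type is a universe). The first argument is fuel; since the variables of
 \<open>cty \<Gamma> x\<close> are all \<open>> x\<close>, fuel \<open>length \<Gamma>\<close> suffices.\<close>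
fun fvl :: "nat \<Rightarrow> cterm list \<Rightarrow> nat list \<Rightarrow> nat list" where
  "fvl 0 \<Gamma> xs = xs"
| "fvl (Suc n) \<Gamma> xs =
     lunion (foldl lunion [] (map (\<lambda>x. fvl n \<Gamma> (ctxord (cfv (cty \<Gamma> x)))) xs)) xs"

definition FV :: "cterm list \<Rightarrow> cterm \<Rightarrow> cterm \<Rightarrow> nat list" where
  "FV \<Gamma> M A = fvl (length \<Gamma>) \<Gamma> (ctxord (cfv M \<union> cfv A))"

primrec pos :: "nat list \<Rightarrow> nat \<Rightarrow> nat" where
  "pos [] j = 0"
| "pos (x # xs) j = (if x = j then 0 else Suc (pos xs j))"

text \<open>Renaming from context \<open>\<Gamma>\<close> into the telescope of the first \<open>m\<close> label parameters
 \<open>xs\<close> (parameter \<open>k\<close> has index \<open>m - 1 - k\<close> there).\<close>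
definition telren :: "nat list \<Rightarrow> nat \<Rightarrow> nat \<Rightarrow> nat" where
  "telren xs m j = m - Suc (pos xs j)"

definition upren :: "(nat \<Rightarrow> nat) \<Rightarrow> nat \<Rightarrow> nat" where
  "upren f i = (case i of 0 \<Rightarrow> 0 | Suc j \<Rightarrow> Suc (f j))"

text \<open>The translation, by induction on the typing derivation:
 \<open>tr \<Gamma> M A Mt \<Delta>\<close> means that some derivation of \<open>\<Gamma> \<turnstile> M : A\<close> yields
 \<open>[[M]] = Mt\<close> and \<open>[[M]]_d = \<Delta>\<close>. The derivation is the CC derivation, where
 the derivations of types needed for \<open>[[-]]\<close>, \<open>[[-]]_d\<close> (types of variables,
 \<open>B[N/x]\<close> in applications, codomain \<open>B\<close> of a lambda) are carried as premises.\<close>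
inductive tr :: "cterm list \<Rightarrow> cterm \<Rightarrow> cterm \<Rightarrow> dterm \<Rightarrow> lctx \<Rightarrow> bool" where
  tr_univ: "cc_wf \<Gamma> \<Longrightarrow> tr \<Gamma> (CU i) (CU (Suc i)) (DU i) []"
| tr_tunit: "cc_wf \<Gamma> \<Longrightarrow> tr \<Gamma> CTUnit (CU 0) DTUnit []"
| tr_unitv: "cc_wf \<Gamma> \<Longrightarrow> tr \<Gamma> CUnitV CTUnit DUnitV []"
| tr_tnat: "cc_wf \<Gamma> \<Longrightarrow> tr \<Gamma> CTNat (CU 0) DTNat []"
| tr_natv: "cc_wf \<Gamma> \<Longrightarrow> tr \<Gamma> (CNatV n) CTNat (DNatV n) []"
| tr_var: "cc_wf \<Gamma> \<Longrightarrow> i < length \<Gamma> \<Longrightarrow> tr \<Gamma> (cty \<Gamma> i) (CU k) At \<Delta>A \<Longrightarrow>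
           tr \<Gamma> (CVar i) (cty \<Gamma> i) (DVar i) \<Delta>A"
| tr_pi: "tr \<Gamma> A (CU i) At \<Delta>1 \<Longrightarrow> tr (A # \<Gamma>) B (CU j) Bt \<Delta>2 \<Longrightarrow>
          tr \<Gamma> (CPi A B) (CU (max i j)) (DPi At Bt) (lunion \<Delta>1 \<Delta>2)"
| tr_app: "tr \<Gamma> M (CPi A B) Mt \<Delta>1 \<Longrightarrow> tr \<Gamma> N A Nt \<Delta>2 \<Longrightarrow>
           tr \<Gamma> (csubst B 0 N) (CU k) Bt \<Delta>3 \<Longrightarrow>
           tr \<Gamma> (CApp M N) (csubst B 0 N) (DApp Mt Nt) (lunion (lunion \<Delta>1 \<Delta>2) \<Delta>3)"
| tr_lam: "tr (A # \<Gamma>) M B Mt \<Delta>M \<Longrightarrow> tr \<Gamma> A (CU i) At \<Delta>A \<Longrightarrow>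
           tr (A # \<Gamma>) B (CU j) Bt \<Delta>B \<Longrightarrow>
           xs = FV \<Gamma> (CLam t A M) (CPi A B) \<Longrightarrow>
           length Ats = length xs \<Longrightarrow>
           (\<forall>k < length xs. \<exists>u \<Delta>k. tr \<Gamma> (cty \<Gamma> (xs ! k)) (CU u) (Ats ! k) \<Delta>k) \<Longrightarrow>
           tr \<Gamma> (CLam t A M) (CPi A B) (DLab t (map DVar xs))
              (lunion \<Delta>A \<Delta>M @
                [(t, map (\<lambda>k. dren (telren xs k) (Ats ! k)) [0..<length xs],
                  dren (telren xs (length xs)) At,
                  dren (upren (telren xs (length xs))) Mt,
                  dren (upren (telren xs (length xs))) Bt)])"
| tr_conv: "tr \<Gamma> M A Mt \<Delta>1 \<Longrightarrow> tr \<Gamma> B (CU i) Bt \<Delta>2 \<Longrightarrow> cconv A B \<Longrightarrow>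
            tr \<Gamma> M B Mt (lunion \<Delta>1 \<Delta>2)"

fun base_tr :: "cterm \<Rightarrow> dterm" where
  "base_tr CUnitV = DUnitV"
| "base_tr (CNatV n) = DNatV n"
| "base_tr CTUnit = DTUnit"
| "base_tr CTNat = DTNat"
| "base_tr _ = undefined"

end

theory Submission
  imports Defs
begin

lemma clift_clift:
  "i < k + 1 \<Longrightarrow> clift (Suc k) (clift i t) = clift i (clift k t)"
  by (induct t arbitrary: i k) auto

lemma clift_csubst:
  "j < i + 1 \<Longrightarrow> clift i (csubst t j s) = csubst (clift (i + 1) t) j (clift i s)"
  by (induct t arbitrary: i j s) (simp_all add: diff_Suc clift_clift split: nat.split)

lemma clift_csubst_lt:
    "i < j + 1 \<Longrightarrow> clift i (csubst t j s) = csubst (clift i t) (j + 1) (clift i s)"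
  by (induct t arbitrary: i j s) (auto simp add: clift_clift)

lemma csubst_clift [simp]: "csubst (clift k t) k s = t"
  by (induct t arbitrary: k s) simp_all

lemma csubst_csubst:
  "i < j + 1 \<Longrightarrow> csubst (csubst t (Suc j) (clift i v)) i (csubst u j v) = csubst (csubst t i u) j v"
  by (induct t arbitrary: i j u v)
    (auto simp add: diff_Suc clift_clift [symmetric] clift_csubst_lt split: nat.split)

inductive whr :: "cterm \<Rightarrow> cterm \<Rightarrow> bool" where
  w_beta: "whr (CApp (CLam t A N) P) (csubst N 0 P)"
| w_app: "whr M M' \<Longrightarrow> whr (CApp M P) (CApp M' P)"

lemma whr_lift: "whr M M' \<Longrightarrow> whr (clift k M) (clift k M')"
proof (induct arbitrary: k rule: whr.induct)
  case (w_beta t A N P)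
  show ?case using whr.w_beta[of t "clift k A" "clift (Suc k) N" "clift k P"]
    by (simp add: clift_csubst)
qed (auto intro: whr.intros)

lemma whr_subst: "whr M M' \<Longrightarrow> whr (csubst M k N) (csubst M' k N)"
proof (induct arbitrary: k N rule: whr.induct)
  case (w_beta t A B P)
  show ?case using whr.w_beta[of t "csubst A k N" "csubst B (Suc k) (clift 0 N)" "csubst P k N"]
    by (simp add: csubst_csubst[of 0 k, simplified])
qed (auto intro: whr.intros)

lemma whrs_app: "whr\<^sup>*\<^sup>* M M' \<Longrightarrow> whr\<^sup>*\<^sup>* (CApp M P) (CApp M' P)"
  by (induct rule: rtranclp_induct) (auto intro: rtranclp.rtrancl_into_rtrancl w_app)

inductive sr :: "cterm \<Rightarrow> cterm \<Rightarrow> bool" where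
  sr_hd: "whr M M' \<Longrightarrow> sr M' N \<Longrightarrow> sr M N"
| sr_var: "sr (CVar i) (CVar i)"
| sr_u: "sr (CU i) (CU i)"
| sr_tunit: "sr CTUnit CTUnit"
| sr_unitv: "sr CUnitV CUnitV"
| sr_tnat: "sr CTNat CTNat"
| sr_natv: "sr (CNatV n) (CNatV n)"
| sr_pi: "sr A A' \<Longrightarrow> sr B B' \<Longrightarrow> sr (CPi A B) (CPi A' B')"
| sr_app: "sr A A' \<Longrightarrow> sr B B' \<Longrightarrow> sr (CApp A B) (CApp A' B')"
| sr_lam: "sr A A' \<Longrightarrow> sr B B' \<Longrightarrow> sr (CLam t A B) (CLam t A' B')"

lemmas sr_str = sr_var sr_u sr_tunit sr_unitv sr_tnat sr_natv sr_pi sr_app sr_lam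

lemma sr_refl: "sr M M"
  by (induct M) (auto intro: sr_str)

lemma sr_whrs: "whr\<^sup>*\<^sup>* M M' \<Longrightarrow> sr M' N \<Longrightarrow> sr M N"
  by (induct rule: converse_rtranclp_induct) (auto intro: sr_hd)

lemma sr_lift: "sr M N \<Longrightarrow> sr (clift k M) (clift k N)"
  by (induct arbitrary: k rule: sr.induct) (auto intro: sr_str sr_hd whr_lift)

lemma sr_subst: "sr M M' \<Longrightarrow> sr N N' \<Longrightarrow> sr (csubst M k N) (csubst M' k N')"
proof (induct arbitrary: k N N' rule: sr.induct)
  case (sr_hd M M' P)
  then show ?case by (auto intro: sr.sr_hd whr_subst)
next
  case (sr_var i)
  then show ?case by (auto intro: sr_str)
next
  case (sr_pi A A' B B')
  have "sr (csubst B (Suc k) (clift 0 N)) (csubst B' (Suc k) (clift 0 N'))"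
    using sr_pi sr_lift by blast
  then show ?case using sr_pi by (auto intro!: sr_str)
next
  case (sr_lam A A' B B' t)
  have "sr (csubst B (Suc k) (clift 0 N)) (csubst B' (Suc k) (clift 0 N'))"
    using sr_lam sr_lift by blast
  then show ?case using sr_lam by (auto intro!: sr_str)
qed (auto intro: sr_str)

lemma sr_lam_inv: "sr M X \<Longrightarrow> X = CLam t T P' \<Longrightarrow> \<exists>T0 P0. whr\<^sup>*\<^sup>* M (CLam t T0 P0) \<and> sr P0 P'"
proof (induct arbitrary: t T P' rule: sr.induct)
  case (sr_hd M M' N)
  then obtain T0 P0 where "whr\<^sup>*\<^sup>* M' (CLam t T0 P0)" "sr P0 P'" by blast
  then show ?case using sr_hd.hyps(1) by (meson converse_rtranclp_into_rtranclp)
qed auto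

inductive_cases ccomp_appE: "ccomp R (CApp M N) X"
inductive_cases ccomp_lamE: "ccomp R (CLam t M N) X"
inductive_cases ccomp_piE: "ccomp R (CPi M N) X"
inductive_cases ccomp_varE: "ccomp R (CVar i) X"
inductive_cases ccomp_uE: "ccomp R (CU i) X"
inductive_cases ccomp_tunitE: "ccomp R CTUnit X"
inductive_cases ccomp_unitvE: "ccomp R CUnitV X"
inductive_cases ccomp_tnatE: "ccomp R CTNat X"
inductive_cases ccomp_natvE: "ccomp R (CNatV n) X"
inductive_cases cbeta_headE: "cbeta_head M N"

lemma sr_step: "sr M N \<Longrightarrow> ccomp cbeta_head N N' \<Longrightarrow> sr M N'"
proof (induct arbitrary: N' rule: sr.induct)
  case (sr_hd M M' N)
  then show ?case by (auto intro: sr.sr_hd)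
next
  case (sr_var i) then show ?case by (auto elim: ccomp_varE cbeta_headE)
next
  case (sr_u i) then show ?case by (auto elim: ccomp_uE cbeta_headE)
next
  case sr_tunit then show ?case by (auto elim: ccomp_tunitE cbeta_headE)
next
  case sr_unitv then show ?case by (auto elim: ccomp_unitvE cbeta_headE)
next
  case sr_tnat then show ?case by (auto elim: ccomp_tnatE cbeta_headE)
next
  case (sr_natv n) then show ?case by (auto elim: ccomp_natvE cbeta_headE)
next
  case (sr_pi A A' B B')
  from sr_pi.prems show ?case
    by (rule ccomp_piE) (auto elim: cbeta_headE intro: sr_str sr_pi.hyps)
next
  case (sr_lam A A' B B' t)
  from sr_lam.prems show ?case
    by (rule ccomp_lamE) (auto elim: cbeta_headE intro: sr_str sr_lam.hyps)
next
  case (sr_app A A' B B')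
  from sr_app.prems show ?case
  proof (rule ccomp_appE)
    assume "cbeta_head (CApp A' B') N'"
    then obtain t T P' where A': "A' = CLam t T P'" and N': "N' = csubst P' 0 B'"
      by (auto elim: cbeta_headE)
    from sr_lam_inv[OF sr_app.hyps(1) A'] obtain T0 P0 where
      w: "whr\<^sup>*\<^sup>* A (CLam t T0 P0)" and s: "sr P0 P'" by blast
    have "whr\<^sup>*\<^sup>* (CApp A B) (csubst P0 0 B)"
      using whrs_app[OF w, of B] w_beta[of t T0 P0 B] by (meson rtranclp.rtrancl_into_rtrancl)
    moreover have "sr (csubst P0 0 B) (csubst P' 0 B')" using s sr_app.hyps(3) by (rule sr_subst)
    ultimately show ?thesis using N' by (auto intro: sr_whrs)
  qed (auto intro: sr_str sr_app.hyps)
qed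

lemma cred_sr: "cred M N \<Longrightarrow> sr M N"
  unfolding cred_def by (induct rule: rtranclp_induct) (auto intro: sr_refl sr_step)

lemma sr_const: "sr M N \<Longrightarrow> N = CUnitV \<or> N = CNatV n \<Longrightarrow> whr\<^sup>*\<^sup>* M N"
  by (induct rule: sr.induct) (auto intro: converse_rtranclp_into_rtranclp)

primrec dfv :: "dterm \<Rightarrow> nat set" where
  "dfv (DVar i) = {i}"
| "dfv (DU n) = {}"
| "dfv (DPi A B) = dfv A \<union> {i. Suc i \<in> dfv B}"
| "dfv (DApp M N) = dfv M \<union> dfv N"
| "dfv (DLab l Ns) = \<Union> (set (map dfv Ns))"
| "dfv DTUnit = {}"
| "dfv DUnitV = {}"
| "dfv DTNat = {}"
| "dfv (DNatV n) = {}"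

lemma finite_dfv: "finite (dfv X)"
proof (induct X)
  case (DPi A B)
  have "{i. Suc i \<in> dfv B} = Suc -` dfv B" by auto
  then show ?case using DPi by (simp add: finite_vimageI)
qed auto

lemma finite_cfv: "finite (cfv X)"
proof (induct X)
  case (CPi A B)
  have "{i. Suc i \<in> cfv B} = Suc -` cfv B" by auto
  then show ?case using CPi by (simp add: finite_vimageI)
next
  case (CLam t A B)
  have "{i. Suc i \<in> cfv B} = Suc -` cfv B" by auto
  then show ?case using CLam by (simp add: finite_vimageI)
qed auto

lemma dren_dren: "dren f (dren g X) = dren (\<lambda>i. f (g i)) X"
proof (induct X arbitrary: f g)
  case (DPi A B)
  then show ?case by (simp add: comp_def) (rule arg_cong[where f="\<lambda>h. dren h B"], auto split: nat.split)
qed auto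

lemma dsubst_dren: "dsubst s (dren f X) = dsubst (\<lambda>i. s (f i)) X"
proof (induct X arbitrary: s f)
  case (DPi A B)
  then show ?case by simp (rule arg_cong[where f="\<lambda>h. dsubst h B"], auto split: nat.split)
qed auto

lemma dren_dsubst: "dren f (dsubst s X) = dsubst (\<lambda>i. dren f (s i)) X"
proof (induct X arbitrary: s f)
  case (DPi A B)
  then show ?case
    by simp (rule arg_cong[where f="\<lambda>h. dsubst h B"], auto split: nat.split simp: dlift_def dren_dren)
qed auto

lemma dsubst_dsubst: "dsubst t (dsubst s X) = dsubst (\<lambda>i. dsubst t (s i)) X"
proof (induct X arbitrary: s t)
  case (DPi A B)
  then show ?case
    by simp (rule arg_cong[where f="\<lambda>h. dsubst h B"], auto split: nat.split simp: dlift_def dren_dsubst dsubst_dren)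
qed auto

lemma dsubst_cong: "\<forall>i\<in>dfv X. s i = s' i \<Longrightarrow> dsubst s X = dsubst s' X"
proof (induct X arbitrary: s s')
  case (DPi A B)
  have a: "dsubst s A = dsubst s' A" using DPi(1)[of s s'] DPi(3) by simp
  have b: "\<forall>i\<in>dfv B. (case i of 0 \<Rightarrow> DVar 0 | Suc j \<Rightarrow> dlift (s j)) = (case i of 0 \<Rightarrow> DVar 0 | Suc j \<Rightarrow> dlift (s' j))"
  proof
    fix i assume "i \<in> dfv B" then show "(case i of 0 \<Rightarrow> DVar 0 | Suc j \<Rightarrow> dlift (s j)) = (case i of 0 \<Rightarrow> DVar 0 | Suc j \<Rightarrow> dlift (s' j))"
      using DPi(3) by (cases i) auto
  qed
  show ?case using a DPi(2)[OF b] by simp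
next
  case (DApp A B)
  then show ?case by simp
next
  case (DLab l Ns)
  have "map (dsubst s) Ns = map (dsubst s') Ns"
  proof (rule map_cong[OF refl])
    fix x assume x: "x \<in> set Ns"
    show "dsubst s x = dsubst s' x" using DLab(1)[OF x, of s s'] DLab(2) x by auto
  qed
  then show ?case by simp
qed simp_all

lemma dsubst_DVar: "dsubst DVar X = X"
proof (induct X)
  case (DPi A B)
  have "(\<lambda>i. case i of 0 \<Rightarrow> DVar 0 | Suc j \<Rightarrow> dlift (DVar j)) = DVar"
    by (auto simp: dlift_def split: nat.split)
  then show ?case using DPi by simp
qed (auto simp: map_idI)

lemma dlift_DVar[simp]: "dlift (DVar i) = DVar (Suc i)" by (simp add: dlift_def)

lemma dren_as_dsubst: "dren f X = dsubst (\<lambda>i. DVar (f i)) X"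
  using dsubst_dren[of DVar f X] dsubst_DVar by simp

definition cup :: "(nat \<Rightarrow> cterm) \<Rightarrow> nat \<Rightarrow> cterm" where
  "cup \<sigma> i = (case i of 0 \<Rightarrow> CVar 0 | Suc j \<Rightarrow> clift 0 (\<sigma> j))"

primrec csubstp :: "(nat \<Rightarrow> cterm) \<Rightarrow> cterm \<Rightarrow> cterm" where
  "csubstp \<sigma> (CVar i) = \<sigma> i"
| "csubstp \<sigma> (CU n) = CU n"
| "csubstp \<sigma> (CPi A B) = CPi (csubstp \<sigma> A) (csubstp (cup \<sigma>) B)"
| "csubstp \<sigma> (CApp M N) = CApp (csubstp \<sigma> M) (csubstp \<sigma> N)"
| "csubstp \<sigma> (CLam t A M) = CLam t (csubstp \<sigma> A) (csubstp (cup \<sigma>) M)"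
| "csubstp \<sigma> CTUnit = CTUnit"
| "csubstp \<sigma> CUnitV = CUnitV"
| "csubstp \<sigma> CTNat = CTNat"
| "csubstp \<sigma> (CNatV n) = CNatV n"

lemma clift_csubstp: "clift k M = csubstp (\<lambda>i. CVar (if i < k then i else Suc i)) M"
proof (induct M arbitrary: k)
  case (CPi A B)
  have "cup (\<lambda>i. CVar (if i < k then i else Suc i)) = (\<lambda>i. CVar (if i < Suc k then i else Suc i))"
    by (auto simp: cup_def split: nat.split)
  then show ?case using CPi by simp
next
  case (CLam t A B)
  have "cup (\<lambda>i. CVar (if i < k then i else Suc i)) = (\<lambda>i. CVar (if i < Suc k then i else Suc i))"
    by (auto simp: cup_def split: nat.split)
  then show ?case using CLam(1)[of k] CLam(2)[of "Suc k"] by (simp only: clift.simps csubstp.simps)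
qed simp_all

lemma csubst_csubstp: "csubst M k N = csubstp (\<lambda>i. if i < k then CVar i else if i = k then N else CVar (i - 1)) M"
proof (induct M arbitrary: k N)
  case (CPi A B)
  have "cup (\<lambda>i. if i < k then CVar i else if i = k then N else CVar (i - 1)) =
        (\<lambda>i. if i < Suc k then CVar i else if i = Suc k then clift 0 N else CVar (i - 1))"
  proof
    fix i show "cup (\<lambda>i. if i < k then CVar i else if i = k then N else CVar (i - 1)) i =
        (if i < Suc k then CVar i else if i = Suc k then clift 0 N else CVar (i - 1))"
      by (cases i) (simp_all add: cup_def)
  qed
  then show ?case using CPi by simp
next
  case (CLam t A B)
  have "cup (\<lambda>i. if i < k then CVar i else if i = k then N else CVar (i - 1)) =
        (\<lambda>i. if i < Suc k then CVar i else if i = Suc k then clift 0 N else CVar (i - 1))"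
  proof
    fix i show "cup (\<lambda>i. if i < k then CVar i else if i = k then N else CVar (i - 1)) i =
        (if i < Suc k then CVar i else if i = Suc k then clift 0 N else CVar (i - 1))"
      by (cases i) (simp_all add: cup_def)
  qed
  then show ?case using CLam(1)[of k N] CLam(2)[of "Suc k" "clift 0 N"] by (simp only: csubst.simps csubstp.simps)
qed simp_all

lemma csubstp_CVar: "csubstp CVar M = M"
proof (induct M)
  case (CPi A B)
  have "cup CVar = CVar" by (auto simp: cup_def split: nat.split)
  then show ?case using CPi by simp
next
  case (CLam t A B)
  have "cup CVar = CVar" by (auto simp: cup_def split: nat.split)
  then show ?case using CLam(1) CLam(2) by (simp only: csubstp.simps)
qed simp_all

definition rcond :: "dterm list \<Rightarrow> (nat \<Rightarrow> dterm) \<Rightarrow> bool" where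
  "rcond Ns \<rho> \<longleftrightarrow> \<rho> 0 = DVar 0 \<and> (\<forall>i. 0 < i \<and> i \<le> length Ns \<longrightarrow> \<rho> i = dlift (Ns ! (length Ns - i)))"

inductive sim :: "lctx \<Rightarrow> cterm \<Rightarrow> dterm \<Rightarrow> bool" for \<Delta> where
  s_var: "sim \<Delta> (CVar i) (DVar i)"
| s_u: "sim \<Delta> (CU i) (DU i)"
| s_tunit: "sim \<Delta> CTUnit DTUnit"
| s_unitv: "sim \<Delta> CUnitV DUnitV"
| s_tnat: "sim \<Delta> CTNat DTNat"
| s_natv: "sim \<Delta> (CNatV n) (DNatV n)"
| s_pi: "sim \<Delta> A At \<Longrightarrow> sim \<Delta> B Bt \<Longrightarrow> sim \<Delta> (CPi A B) (DPi At Bt)"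
| s_app: "sim \<Delta> M Mt \<Longrightarrow> sim \<Delta> N Nt \<Longrightarrow> sim \<Delta> (CApp M N) (DApp Mt Nt)"
| s_lam: "(l, As, A', L, B') \<in> set \<Delta> \<Longrightarrow> length Ns = length As \<Longrightarrow>
   (\<forall>\<rho>. rcond Ns \<rho> \<longrightarrow> sim \<Delta> N (dsubst \<rho> L))
   \<Longrightarrow> sim \<Delta> (CLam t A N) (DLab l Ns)"

lemma sim_mono: "sim \<Delta> M X \<Longrightarrow> set \<Delta> \<subseteq> set \<Delta>' \<Longrightarrow> sim \<Delta>' M X"
proof (induct rule: sim.induct)
  case (s_lam l As A' L B' Ns N t A)
  show ?case
  proof (rule sim.s_lam)
    show "(l, As, A', L, B') \<in> set \<Delta>'" using s_lam by blast
    show "length Ns = length As" by fact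
    show "\<forall>\<rho>. rcond Ns \<rho> \<longrightarrow> sim \<Delta>' N (dsubst \<rho> L)" using s_lam(3,4) by blast
  qed
qed (auto intro: sim.intros)

lemma binder_ok:
  assumes "\<forall>j. Suc j \<in> S \<longrightarrow> R (\<sigma> j) (\<tau> j)"
    and "\<And>a b. R a b \<Longrightarrow> R (clift 0 a) (dlift b)" and "R (CVar 0) (DVar 0)"
  shows "\<forall>i\<in>S. R (cup \<sigma> i) (case i of 0 \<Rightarrow> DVar 0 | Suc j \<Rightarrow> dlift (\<tau> j))"
proof
  fix i assume "i \<in> S" then show "R (cup \<sigma> i) (case i of 0 \<Rightarrow> DVar 0 | Suc j \<Rightarrow> dlift (\<tau> j))"
    using assms by (cases i) (auto simp: cup_def)
qed

lemma bound_exists: "\<exists>m::nat. (\<forall>j\<in>cfv N. j \<le> m) \<and> (\<forall>x\<in>set Ns. \<forall>j\<in>dfv x. Suc j \<le> m)"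
proof -
  have "finite (cfv N \<union> (\<Union>x\<in>set Ns. Suc ` dfv x))" using finite_cfv finite_dfv by auto
  then obtain m where "\<forall>j\<in>cfv N \<union> (\<Union>x\<in>set Ns. Suc ` dfv x). j \<le> m"
    using finite_nat_set_iff_bounded_le by blast
  then show ?thesis by blast
qed

lemma dsubst_dlift: "dsubst s (dlift Y) = dsubst (\<lambda>j. s (Suc j)) Y"
  by (simp add: dlift_def dsubst_dren)

lemma dlift_dsubst: "dlift (dsubst s Y) = dsubst (\<lambda>j. dlift (s j)) Y"
  by (simp add: dlift_def dren_dsubst)

lemma sim_subst_gen:
  assumes R_sim: "\<And>a b. R a b \<Longrightarrow> sim \<Delta> a b"
    and R_lift: "\<And>a b. R a b \<Longrightarrow> R (clift 0 a) (dlift b)"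
    and R_0: "R (CVar 0) (DVar 0)"
  shows "sim \<Delta> M X \<Longrightarrow> \<forall>\<sigma> \<tau>. (\<forall>i\<in>cfv M. R (\<sigma> i) (\<tau> i)) \<longrightarrow> sim \<Delta> (csubstp \<sigma> M) (dsubst \<tau> X)"
proof (induct rule: sim.induct)
  case (s_var i)
  then show ?case using R_sim by auto
next
  case (s_pi A At B Bt)
  show ?case
  proof (intro allI impI)
    fix \<sigma> \<tau> assume h: "\<forall>i\<in>cfv (CPi A B). R (\<sigma> i) (\<tau> i)"
    have "\<forall>i\<in>cfv B. R (cup \<sigma> i) (case i of 0 \<Rightarrow> DVar 0 | Suc j \<Rightarrow> dlift (\<tau> j))"
      by (rule binder_ok) (use h R_lift R_0 in auto)
    then show "sim \<Delta> (csubstp \<sigma> (CPi A B)) (dsubst \<tau> (DPi At Bt))"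
      using s_pi h by (auto intro!: sim.s_pi)
  qed
next
  case (s_app M Mt N Nt)
  then show ?case by (auto intro!: sim.s_app)
next
  case (s_lam l As A' L B' Ns N t A)
  show ?case
  proof (intro allI impI)
    fix \<sigma> \<tau> assume h: "\<forall>i\<in>cfv (CLam t A N). R (\<sigma> i) (\<tau> i)"
    define n where "n = length Ns"
    obtain m where m1: "\<forall>j\<in>cfv N. j \<le> m" and m2: "\<forall>x\<in>set Ns. \<forall>j\<in>dfv x. Suc j \<le> m"
      using bound_exists by blast
    have bnd: "\<forall>i\<in>cfv N. R (cup \<sigma> i) (case i of 0 \<Rightarrow> DVar 0 | Suc j \<Rightarrow> dlift (\<tau> j))"
      by (rule binder_ok) (use h R_lift R_0 in auto)
    show "sim \<Delta> (csubstp \<sigma> (CLam t A N)) (dsubst \<tau> (DLab l Ns))"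
      unfolding csubstp.simps dsubst.simps
    proof (rule sim.s_lam)
      show "(l, As, A', L, B') \<in> set \<Delta>" by fact
      show "length (map (dsubst \<tau>) Ns) = length As" using s_lam by simp
      show "\<forall>\<rho>'. rcond (map (dsubst \<tau>) Ns) \<rho>' \<longrightarrow> sim \<Delta> (csubstp (cup \<sigma>) N) (dsubst \<rho>' L)"
      proof (intro allI impI)
        fix \<rho>' assume r': "rcond (map (dsubst \<tau>) Ns) \<rho>'"
        define \<rho> where "\<rho> = (\<lambda>i. if i = 0 then DVar 0 else if i \<le> n then dlift (Ns ! (n - i)) else DVar (m + i))"
        define \<tau>'' where "\<tau>'' = (\<lambda>j. if m < j then \<rho>' (j - m) else (case j of 0 \<Rightarrow> DVar 0 | Suc k \<Rightarrow> dlift (\<tau> k)))"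
        have rc: "rcond Ns \<rho>" unfolding rcond_def \<rho>_def n_def by auto
        have IH: "\<forall>\<sigma> \<tau>. (\<forall>i\<in>cfv N. R (\<sigma> i) (\<tau> i)) \<longrightarrow> sim \<Delta> (csubstp \<sigma> N) (dsubst \<tau> (dsubst \<rho> L))"
          using s_lam(3) rc by blast
        have "\<forall>i\<in>cfv N. R (cup \<sigma> i) (\<tau>'' i)"
        proof
          fix i assume i: "i \<in> cfv N"
          then have "\<tau>'' i = (case i of 0 \<Rightarrow> DVar 0 | Suc j \<Rightarrow> dlift (\<tau> j))" using m1 \<tau>''_def by auto
          then show "R (cup \<sigma> i) (\<tau>'' i)" using bnd i by simp
        qed
        then have S: "sim \<Delta> (csubstp (cup \<sigma>) N) (dsubst \<tau>'' (dsubst \<rho> L))" using IH by blast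
        have eq: "(\<lambda>i. dsubst \<tau>'' (\<rho> i)) = \<rho>'"
        proof
          fix i
          show "dsubst \<tau>'' (\<rho> i) = \<rho>' i"
          proof (cases "i = 0")
            case True then show ?thesis using r' by (simp add: \<rho>_def \<tau>''_def rcond_def)
          next
            case False
            show ?thesis
            proof (cases "i \<le> n")
              case True
              define Y where "Y = Ns ! (n - i)"
              have Yin: "Y \<in> set Ns" using True False unfolding Y_def n_def by auto
              have "dsubst \<tau>'' (\<rho> i) = dsubst \<tau>'' (dlift Y)" using True False by (simp add: \<rho>_def Y_def)
              also have "\<dots> = dsubst (\<lambda>j. \<tau>'' (Suc j)) Y" by (rule dsubst_dlift)
              also have "\<dots> = dsubst (\<lambda>j. dlift (\<tau> j)) Y"
              proof (rule dsubst_cong, intro ballI)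
                fix j assume "j \<in> dfv Y"
                then have "Suc j \<le> m" using m2 Yin by blast
                then show "\<tau>'' (Suc j) = dlift (\<tau> j)" by (simp add: \<tau>''_def)
              qed
              also have "\<dots> = dlift (dsubst \<tau> Y)" by (rule dlift_dsubst[symmetric])
              also have "\<dots> = \<rho>' i" using r' True False unfolding rcond_def Y_def n_def by auto
              finally show ?thesis .
            next
              case False2: False
              then show ?thesis using False by (simp add: \<rho>_def \<tau>''_def)
            qed
          qed
        qed
        show "sim \<Delta> (csubstp (cup \<sigma>) N) (dsubst \<rho>' L)"
          using S by (simp add: dsubst_dsubst eq)
      qed
    qed
  qed
qed (auto intro: sim.intros)

lemma sim_lift: "sim \<Delta> M X \<Longrightarrow> sim \<Delta> (clift 0 M) (dlift X)"
proof -
  assume s: "sim \<Delta> M X"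
  let ?R = "\<lambda>a b. \<exists>i. a = CVar i \<and> b = DVar i"
  have "\<forall>\<sigma> \<tau>. (\<forall>i\<in>cfv M. ?R (\<sigma> i) (\<tau> i)) \<longrightarrow> sim \<Delta> (csubstp \<sigma> M) (dsubst \<tau> X)"
    by (rule sim_subst_gen[OF _ _ _ s]) (auto intro: s_var)
  then have "sim \<Delta> (csubstp (\<lambda>i. CVar (Suc i)) M) (dsubst (\<lambda>i. DVar (Suc i)) X)" by auto
  moreover have "clift 0 M = csubstp (\<lambda>i. CVar (Suc i)) M" using clift_csubstp[of 0 M] by simp
  moreover have "dlift X = dsubst (\<lambda>i. DVar (Suc i)) X" by (simp add: dlift_def dren_as_dsubst)
  ultimately show ?thesis by simp
qed

lemma sim_subst: "sim \<Delta> M X \<Longrightarrow> (\<forall>i\<in>cfv M. sim \<Delta> (\<sigma> i) (\<tau> i)) \<Longrightarrow> sim \<Delta> (csubstp \<sigma> M) (dsubst \<tau> X)"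
  using sim_subst_gen[of "sim \<Delta>" \<Delta> M X] sim_lift s_var by blast

inductive_cases sim_appE: "sim \<Delta> (CApp M N) X"
inductive_cases sim_lamE: "sim \<Delta> (CLam t A N) X"
inductive_cases sim_unitvE: "sim \<Delta> CUnitV X"
inductive_cases sim_natvE: "sim \<Delta> (CNatV n) X"

lemma sim_beta:
  assumes "sim \<Delta> (CApp (CLam t A N) P) X"
  shows "\<exists>X'. dstep \<Delta> X X' \<and> sim \<Delta> (csubst N 0 P) X'"
proof -
  from assms obtain Ft Pt where X: "X = DApp Ft Pt" and sF: "sim \<Delta> (CLam t A N) Ft" and sP: "sim \<Delta> P Pt"
    by (auto elim: sim_appE)
  from sF obtain l As A' L B' Ns where Ft: "Ft = DLab l Ns" and e: "(l, As, A', L, B') \<in> set \<Delta>"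
    and len: "length Ns = length As" and body: "\<forall>\<rho>. rcond Ns \<rho> \<longrightarrow> sim \<Delta> N (dsubst \<rho> L)"
    by (auto elim: sim_lamE)
  define n where "n = length Ns"
  obtain m where m1: "\<forall>j\<in>cfv N. j \<le> m" and m2: "\<forall>x\<in>set Ns. \<forall>j\<in>dfv x. Suc j \<le> m"
    using bound_exists by blast
  define \<rho> where "\<rho> = (\<lambda>i. if i = 0 then DVar 0 else if i \<le> n then dlift (Ns ! (n - i)) else DVar (m + i))"
  define \<tau> where "\<tau> = (\<lambda>j. if m < j then lsub Ns Pt (j - m) else if j = 0 then Pt else DVar (j - 1))"
  define \<sigma> where "\<sigma> = (\<lambda>i. if i < (0::nat) then CVar i else if i = 0 then P else CVar (i - 1))"
  have rc: "rcond Ns \<rho>" unfolding rcond_def \<rho>_def n_def by auto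
  have sN: "sim \<Delta> N (dsubst \<rho> L)" using body rc by blast
  have "\<forall>i\<in>cfv N. sim \<Delta> (\<sigma> i) (\<tau> i)"
  proof
    fix i assume "i \<in> cfv N"
    then have "i \<le> m" using m1 by blast
    then show "sim \<Delta> (\<sigma> i) (\<tau> i)" using sP by (auto simp: \<sigma>_def \<tau>_def intro: s_var)
  qed
  then have S: "sim \<Delta> (csubstp \<sigma> N) (dsubst \<tau> (dsubst \<rho> L))" by (rule sim_subst[OF sN])
  have eq: "(\<lambda>i. dsubst \<tau> (\<rho> i)) = lsub Ns Pt"
  proof
    fix i
    show "dsubst \<tau> (\<rho> i) = lsub Ns Pt i"
    proof (cases "i = 0")
      case True then show ?thesis by (simp add: \<rho>_def \<tau>_def lsub_def)
    next
      case False
      show ?thesis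
      proof (cases "i \<le> n")
        case True
        define Y where "Y = Ns ! (n - i)"
        have Yin: "Y \<in> set Ns" using True False unfolding Y_def n_def by auto
        have "dsubst \<tau> (\<rho> i) = dsubst \<tau> (dlift Y)" using True False by (simp add: \<rho>_def Y_def)
        also have "\<dots> = dsubst (\<lambda>j. \<tau> (Suc j)) Y" by (rule dsubst_dlift)
        also have "\<dots> = dsubst DVar Y"
        proof (rule dsubst_cong, intro ballI)
          fix j assume "j \<in> dfv Y"
          then have "Suc j \<le> m" using m2 Yin by blast
          then show "\<tau> (Suc j) = DVar j" by (simp add: \<tau>_def)
        qed
        also have "\<dots> = Y" by (rule dsubst_DVar)
        also have "\<dots> = lsub Ns Pt i" using True False unfolding lsub_def Y_def n_def by auto
        finally show ?thesis .
      next
        case False2: False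
        then show ?thesis using False by (simp add: \<rho>_def \<tau>_def)
      qed
    qed
  qed
  have "csubst N 0 P = csubstp \<sigma> N" unfolding \<sigma>_def by (rule csubst_csubstp)
  then have "sim \<Delta> (csubst N 0 P) (dsubst (lsub Ns Pt) L)" using S by (simp add: dsubst_dsubst eq)
  moreover have "dstep \<Delta> X (dsubst (lsub Ns Pt) L)" unfolding X Ft using e len by (rule dstep.lab)
  ultimately show ?thesis by blast
qed

lemma dsteps_appL: "dsteps \<Delta> M M' \<Longrightarrow> dsteps \<Delta> (DApp M N) (DApp M' N)"
  unfolding dsteps_def
  by (induct rule: rtranclp_induct) (auto intro: rtranclp.rtrancl_into_rtrancl dstep.AppL)

lemma sim_whr: "whr M M' \<Longrightarrow> sim \<Delta> M X \<Longrightarrow> \<exists>X'. dsteps \<Delta> X X' \<and> sim \<Delta> M' X'"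
proof (induct arbitrary: X rule: whr.induct)
  case (w_beta t A N P)
  then show ?case using sim_beta unfolding dsteps_def by blast
next
  case (w_app M M' P)
  from w_app.prems obtain Mt Pt where X: "X = DApp Mt Pt" and "sim \<Delta> M Mt" "sim \<Delta> P Pt"
    by (auto elim: sim_appE)
  then obtain Mt' where "dsteps \<Delta> Mt Mt'" "sim \<Delta> M' Mt'" using w_app.hyps(2) by blast
  then show ?case using X \<open>sim \<Delta> P Pt\<close> by (auto intro: dsteps_appL s_app)
qed

lemma sim_whrs: "whr\<^sup>*\<^sup>* M M' \<Longrightarrow> sim \<Delta> M X \<Longrightarrow> \<exists>X'. dsteps \<Delta> X X' \<and> sim \<Delta> M' X'"
proof (induct arbitrary: X rule: converse_rtranclp_induct)
  case base then show ?case unfolding dsteps_def by blast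
next
  case (step y z)
  obtain X1 where "dsteps \<Delta> X X1" "sim \<Delta> z X1" using sim_whr step by blast
  then obtain X2 where "dsteps \<Delta> X1 X2" "sim \<Delta> M' X2" using step by blast
  then show ?case using \<open>dsteps \<Delta> X X1\<close> unfolding dsteps_def by (meson rtranclp_trans)
qed

lemma set_lunion[simp]: "set (lunion a b) = set a \<union> set b"
  unfolding lunion_def by auto

lemma pos_lt: "j \<in> set xs \<Longrightarrow> pos xs j < length xs"
  by (induct xs) auto

lemma nth_pos: "j \<in> set xs \<Longrightarrow> xs ! pos xs j = j"
  by (induct xs) auto

lemma fvl_sup: "set ys \<subseteq> set (fvl n \<Gamma> ys)"
  by (cases n) auto

lemma ctxord_set: "finite S \<Longrightarrow> set (ctxord S) = S"
  unfolding ctxord_def by simp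

lemma FV_sup: "cfv M \<subseteq> set (FV \<Gamma> M A)"
  unfolding FV_def using fvl_sup ctxord_set finite_cfv
  by (metis finite_UnI sup.boundedE)

lemma tr_sim: "tr \<Gamma> M A Mt \<Delta> \<Longrightarrow> sim \<Delta> M Mt"
proof (induct rule: tr.induct)
  case (tr_pi \<Gamma> A i At \<Delta>1 B j Bt \<Delta>2)
  then show ?case by (auto intro!: s_pi elim: sim_mono)
next
  case (tr_app \<Gamma> M A B Mt \<Delta>1 N Nt \<Delta>2 k Bt \<Delta>3)
  then show ?case by (auto intro!: s_app elim: sim_mono)
next
  case (tr_conv \<Gamma> M A Mt \<Delta>1 B i Bt \<Delta>2)
  then show ?case by (auto elim: sim_mono)
next
  case (tr_lam A \<Gamma> M B Mt \<Delta>M i At \<Delta>A j Bt \<Delta>B xs t Ats)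
  define n where "n = length xs"
  define g where "g = telren xs n"
  let ?\<Delta> = "lunion \<Delta>A \<Delta>M @
                [(t, map (\<lambda>k. dren (telren xs k) (Ats ! k)) [0..<length xs],
                  dren (telren xs (length xs)) At,
                  dren (upren (telren xs (length xs))) Mt,
                  dren (upren (telren xs (length xs))) Bt)]"
  have sM: "sim ?\<Delta> M Mt" using tr_lam(2) by (rule sim_mono) auto
  have xs_sup: "cfv (CLam t A M) \<subseteq> set xs" using tr_lam(7) FV_sup by blast
  show ?case
  proof (rule s_lam)
    show "(t, map (\<lambda>k. dren (telren xs k) (Ats ! k)) [0..<length xs],
                  dren (telren xs (length xs)) At,
                  dren (upren (telren xs (length xs))) Mt,
                  dren (upren (telren xs (length xs))) Bt) \<in> set ?\<Delta>" by simp
    show "length (map DVar xs) = length (map (\<lambda>k. dren (telren xs k) (Ats ! k)) [0..<length xs])" by simp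
    show "\<forall>\<rho>. rcond (map DVar xs) \<rho> \<longrightarrow> sim ?\<Delta> M (dsubst \<rho> (dren (upren (telren xs (length xs))) Mt))"
    proof (intro allI impI)
      fix \<rho> assume r: "rcond (map DVar xs) \<rho>"
      have "\<forall>i\<in>cfv M. \<rho> (upren g i) = DVar i"
      proof
        fix i assume i: "i \<in> cfv M"
        show "\<rho> (upren g i) = DVar i"
        proof (cases i)
          case 0 then show ?thesis using r by (simp add: upren_def rcond_def)
        next
          case (Suc j)
          then have jx: "j \<in> set xs" using i xs_sup by auto
          define p where "p = pos xs j"
          have pn: "p < n" unfolding p_def n_def using jx by (rule pos_lt)
          have u: "upren g i = Suc (n - Suc p)" using Suc by (simp add: upren_def g_def telren_def p_def)
          have "n - Suc (n - Suc p) = p" using pn by simp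
          then have "\<rho> (Suc (n - Suc p)) = dlift (DVar (xs ! p))"
            using r pn unfolding rcond_def n_def by auto
          then show ?thesis using u nth_pos[OF jx] Suc by (simp add: p_def)
        qed
      qed
      then have "\<forall>i\<in>cfv M. sim ?\<Delta> (CVar i) (\<rho> (upren g i))" by (auto intro: s_var)
      then have "sim ?\<Delta> (csubstp CVar M) (dsubst (\<lambda>i. \<rho> (upren g i)) Mt)" by (rule sim_subst[OF sM])
      then show "sim ?\<Delta> M (dsubst \<rho> (dren (upren (telren xs (length xs))) Mt))"
        by (simp add: csubstp_CVar dsubst_dren g_def n_def)
    qed
  qed
qed (auto intro: sim.intros)

theorem corollary3p15:
  assumes "ground_type A"
    and "value_of v A"
    and "cc_ty [] M A"
    and "distinct (ctags M)"
    and "tr [] M A Mt \<Delta>M"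
    and "cred M v"
  shows "\<exists>v'. dsteps (lunion [] \<Delta>M) Mt v' \<and> deq (lunion [] \<Delta>M) v' (base_tr v)"
proof -
  have D: "lunion [] \<Delta>M = \<Delta>M" by (simp add: lunion_def)
  have vv: "v = CUnitV \<or> (\<exists>n. v = CNatV n)" using assms(2) by (auto elim: value_of.cases)
  have sr: "sr M v" using assms(6) by (rule cred_sr)
  have w: "whr\<^sup>*\<^sup>* M v" using vv sr_const[OF sr] by auto
  have s: "sim \<Delta>M M Mt" using assms(5) by (rule tr_sim)
  obtain X where X: "dsteps \<Delta>M Mt X" "sim \<Delta>M v X" using sim_whrs[OF w s] by blast
  have "X = base_tr v" using vv X(2) by (auto elim: sim_unitvE sim_natvE)
  moreover have "deq \<Delta>M X X" by (rule deq.common) (auto simp: dsteps_def)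
  ultimately show ?thesis using X D by auto
qed

end
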